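(* Let $G$ be a connected graph with $\delta(G)=1$ and girth at least $15$. If $G\in\mathcal U$, then every vertex $v$ with $d_G(v,S_G)=2$ has exactly one single star support vertex at distance exactly $2$ from $v$.
   Context: All graphs are finite and simple. A set $P\subseteq V(G)$ is an open packing if no two distinct vertices of $P$ have a common neighbor; it is maximal if maximal under inclusion among open packings. $\rho^o(G)$ is the maximum size of an open packing and $\rho^o_L(G)$ the minimum size of a maximal open packing; $\mathcal U$ is the class of graphs with $\rho^o_L(G)=\rho^o(G)$. A leaf is a vertex of degree $1$; a support vertex is a vertex adjacent to at least one leaf; $S_G$ is the set of support vertices and $d_G(v,S_G)=\min_{s\in S_G}d_G(v,s)$. A single star support vertex is a support vertex not adjacent to any other support vertex. *)

theory Defs
  imports Main
begin

definition graph :: "'a set \<Rightarrow> ('a \<Rightarrow> 'a \<Rightarrow> bool) \<Rightarrow> bool" where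
  "graph V E \<longleftrightarrow> finite V \<and> (\<forall>u v. E u v \<longrightarrow> u \<in> V \<and> v \<in> V)
     \<and> (\<forall>u v. E u v \<longrightarrow> E v u) \<and> (\<forall>v. \<not> E v v)"

definition nbhd :: "'a set \<Rightarrow> ('a \<Rightarrow> 'a \<Rightarrow> bool) \<Rightarrow> 'a \<Rightarrow> 'a set" where
  "nbhd V E v = {u \<in> V. E v u}"

definition degree :: "'a set \<Rightarrow> ('a \<Rightarrow> 'a \<Rightarrow> bool) \<Rightarrow> 'a \<Rightarrow> nat" where
  "degree V E v = card (nbhd V E v)"

definition min_degree :: "'a set \<Rightarrow> ('a \<Rightarrow> 'a \<Rightarrow> bool) \<Rightarrow> nat" where
  "min_degree V E = Min (degree V E ` V)"

definition walk :: "'a set \<Rightarrow> ('a \<Rightarrow> 'a \<Rightarrow> bool) \<Rightarrow> 'a list \<Rightarrow> bool" where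
  "walk V E xs \<longleftrightarrow> xs \<noteq> [] \<and> set xs \<subseteq> V \<and> (\<forall>i. Suc i < length xs \<longrightarrow> E (xs ! i) (xs ! Suc i))"

definition connected :: "'a set \<Rightarrow> ('a \<Rightarrow> 'a \<Rightarrow> bool) \<Rightarrow> bool" where
  "connected V E \<longleftrightarrow> (\<forall>u\<in>V. \<forall>v\<in>V. \<exists>xs. walk V E xs \<and> hd xs = u \<and> last xs = v)"

definition dist :: "'a set \<Rightarrow> ('a \<Rightarrow> 'a \<Rightarrow> bool) \<Rightarrow> 'a \<Rightarrow> 'a \<Rightarrow> nat" where
  "dist V E u v = (LEAST n. \<exists>xs. walk V E xs \<and> hd xs = u \<and> last xs = v \<and> length xs = Suc n)"

definition is_cycle :: "'a set \<Rightarrow> ('a \<Rightarrow> 'a \<Rightarrow> bool) \<Rightarrow> 'a list \<Rightarrow> bool" where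
  "is_cycle V E xs \<longleftrightarrow> length xs \<ge> 3 \<and> distinct xs \<and> walk V E xs \<and> E (last xs) (hd xs)"

text \<open>Girth at least g (acyclic graphs have infinite girth).\<close>
definition girth_at_least :: "'a set \<Rightarrow> ('a \<Rightarrow> 'a \<Rightarrow> bool) \<Rightarrow> nat \<Rightarrow> bool" where
  "girth_at_least V E g \<longleftrightarrow> (\<forall>xs. is_cycle V E xs \<longrightarrow> length xs \<ge> g)"

definition leaf :: "'a set \<Rightarrow> ('a \<Rightarrow> 'a \<Rightarrow> bool) \<Rightarrow> 'a \<Rightarrow> bool" where
  "leaf V E v \<longleftrightarrow> v \<in> V \<and> degree V E v = 1"

definition support :: "'a set \<Rightarrow> ('a \<Rightarrow> 'a \<Rightarrow> bool) \<Rightarrow> 'a \<Rightarrow> bool" where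
  "support V E v \<longleftrightarrow> v \<in> V \<and> (\<exists>u. E v u \<and> leaf V E u)"

definition support_set :: "'a set \<Rightarrow> ('a \<Rightarrow> 'a \<Rightarrow> bool) \<Rightarrow> 'a set" where
  "support_set V E = {v \<in> V. support V E v}"

definition single_star_support :: "'a set \<Rightarrow> ('a \<Rightarrow> 'a \<Rightarrow> bool) \<Rightarrow> 'a \<Rightarrow> bool" where
  "single_star_support V E v \<longleftrightarrow> support V E v \<and> (\<forall>u. E v u \<longrightarrow> \<not> support V E u)"

definition dist_set :: "'a set \<Rightarrow> ('a \<Rightarrow> 'a \<Rightarrow> bool) \<Rightarrow> 'a \<Rightarrow> 'a set \<Rightarrow> nat" where
  "dist_set V E v S = Min (dist V E v ` S)"

definition open_packing :: "'a set \<Rightarrow> ('a \<Rightarrow> 'a \<Rightarrow> bool) \<Rightarrow> 'a set \<Rightarrow> bool" where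
  "open_packing V E P \<longleftrightarrow> P \<subseteq> V \<and>
     (\<forall>u\<in>P. \<forall>w\<in>P. u \<noteq> w \<longrightarrow> \<not> (\<exists>x. E u x \<and> E w x))"

definition maximal_open_packing :: "'a set \<Rightarrow> ('a \<Rightarrow> 'a \<Rightarrow> bool) \<Rightarrow> 'a set \<Rightarrow> bool" where
  "maximal_open_packing V E P \<longleftrightarrow> open_packing V E P \<and>
     (\<forall>Q. open_packing V E Q \<and> P \<subseteq> Q \<longrightarrow> Q = P)"

definition open_packing_number :: "'a set \<Rightarrow> ('a \<Rightarrow> 'a \<Rightarrow> bool) \<Rightarrow> nat" where
  "open_packing_number V E = Max (card ` {P. open_packing V E P})"

definition lower_open_packing_number :: "'a set \<Rightarrow> ('a \<Rightarrow> 'a \<Rightarrow> bool) \<Rightarrow> nat" where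
  "lower_open_packing_number V E = Min (card ` {P. maximal_open_packing V E P})"

definition in_U :: "'a set \<Rightarrow> ('a \<Rightarrow> 'a \<Rightarrow> bool) \<Rightarrow> bool" where
  "in_U V E \<longleftrightarrow> lower_open_packing_number V E = open_packing_number V E"

end

theory Submission
  imports Defs
begin


locale grph =
  fixes V :: "'a set" and E :: "'a \<Rightarrow> 'a \<Rightarrow> bool"
  assumes G: "graph V E" and C: "connected V E"
begin

lemma finV: "finite V" using G unfolding graph_def by auto
lemma inV: "E u w \<Longrightarrow> u \<in> V \<and> w \<in> V" using G unfolding graph_def by auto
lemma sym: "E u w \<Longrightarrow> E w u" using G unfolding graph_def by auto
lemma irr: "\<not> E u u" using G unfolding graph_def by auto

abbreviation d where "d \<equiv> dist V E"

lemma dist_le: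
  assumes "walk V E xs" "hd xs = u" "last xs = w" "length xs = Suc n"
  shows "d u w \<le> n"
  unfolding dist_def by (rule Least_le) (use assms in blast)

lemma dist_ex:
  assumes "u \<in> V" "w \<in> V"
  shows "\<exists>xs. walk V E xs \<and> hd xs = u \<and> last xs = w \<and> length xs = Suc (d u w)"
proof -
  obtain xs where xs: "walk V E xs" "hd xs = u" "last xs = w"
    using C assms unfolding connected_def by blast
  then have "length xs = Suc (length xs - 1)" unfolding walk_def by (cases xs) auto
  with xs have ex: "\<exists>n xs. walk V E xs \<and> hd xs = u \<and> last xs = w \<and> length xs = Suc n" by blast
  show ?thesis unfolding dist_def by (rule LeastI_ex[OF ex])
qed

lemma walk_map:
  assumes "\<forall>i<n. E (f i) (f (Suc i))" "f 0 \<in> V"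
  shows "walk V E (map f [0..<Suc n])"
proof -
  have "f i \<in> V" if "i \<le> n" for i
  proof (cases i)
    case 0 then show ?thesis using assms by simp
  next
    case (Suc k) then show ?thesis using assms(1) that inV[of "f k" "f (Suc k)"] by auto
  qed
  then show ?thesis unfolding walk_def using assms(1)
    by (auto simp del: upt_Suc simp: nth_append)
qed

lemma dist_le_fun:
  assumes "\<forall>i<n. E (f (a+i)) (f (a+Suc i))" "f a \<in> V"
  shows "d (f a) (f (a+n)) \<le> n"
proof -
  have w: "walk V E (map (\<lambda>i. f (a+i)) [0..<Suc n])"
    by (rule walk_map) (use assms in auto)
  show ?thesis
    by (rule dist_le[OF w]) (auto simp: hd_map last_map simp del: upt_Suc)
qed

lemma dist_refl: "u \<in> V \<Longrightarrow> d u u = 0"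
  using dist_le_fun[of 0 "\<lambda>_. u" 0] by simp

lemma dist_0: assumes "u \<in> V" "w \<in> V" "d u w = 0" shows "u = w"
proof -
  obtain xs where "walk V E xs" "hd xs = u" "last xs = w" "length xs = 1"
    using dist_ex[OF assms(1,2)] assms(3) by auto
  then show ?thesis by (cases xs) auto
qed

lemma dist_edge_le: assumes "E u w" shows "d u w \<le> 1"
  using dist_le_fun[of 1 "\<lambda>i. if i = 0 then u else w" 0] assms inV by auto

lemma dist_1_iff: assumes "u \<in> V" "w \<in> V" shows "d u w = 1 \<longleftrightarrow> E u w"
proof
  assume "d u w = 1"
  then obtain xs where xs: "walk V E xs" "hd xs = u" "last xs = w" "length xs = 2"
    using dist_ex[OF assms] by auto
  then obtain a b where "xs = [a,b]"
    by (cases xs; cases "tl xs") auto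
  with xs show "E u w" unfolding walk_def by auto
next
  assume e: "E u w"
  then have "u \<noteq> w" using irr by auto
  then have "d u w \<noteq> 0" using dist_0 assms by auto
  with dist_edge_le[OF e] show "d u w = 1" by simp
qed

lemma dist_2_mid: assumes "u \<in> V" "w \<in> V" "d u w = 2" shows "\<exists>c. E u c \<and> E c w"
proof -
  obtain xs where xs: "walk V E xs" "hd xs = u" "last xs = w" "length xs = 3"
    using dist_ex[OF assms(1,2)] assms(3) by auto
  then obtain a b c where "xs = [a,b,c]"
    by (cases xs; cases "tl xs"; cases "tl (tl xs)") auto
  with xs show ?thesis unfolding walk_def
    by (metis One_nat_def Suc_1 last_ConsL last_ConsR less_Suc_eq list.discI list.sel(1) nth_Cons_0 nth_Cons_Suc numeral_3_eq_3 zero_less_Suc)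
qed

lemma dist_tri:
  assumes "u \<in> V" "y \<in> V" "w \<in> V"
  shows "d u w \<le> d u y + d y w"
proof -
  obtain xs where xs: "walk V E xs" "hd xs = u" "last xs = y" "length xs = Suc (d u y)"
    using dist_ex[OF assms(1,2)] by blast
  obtain ys where ys: "walk V E ys" "hd ys = y" "last ys = w" "length ys = Suc (d y w)"
    using dist_ex[OF assms(2,3)] by blast
  define a where "a = d u y"
  define b where "b = d y w"
  define h where "h i = (if i \<le> a then xs!i else ys!(i-a))" for i
  have xa: "xs ! a = y" using xs unfolding a_def by (metis diff_Suc_1 last_conv_nth list.size(3) nat.distinct(1))
  have y0: "ys ! 0 = y" using ys by (metis hd_conv_nth list.size(3) nat.distinct(1))
  have yb: "ys ! b = w" using ys unfolding b_def by (metis diff_Suc_1 last_conv_nth list.size(3) nat.distinct(1))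
  have x0: "xs ! 0 = u" using xs by (metis hd_conv_nth list.size(3) nat.distinct(1))
  have step: "\<forall>i<a+b. E (h (0+i)) (h (0+Suc i))"
  proof (intro allI impI)
    fix i assume i: "i < a + b"
    show "E (h (0+i)) (h (0+Suc i))"
    proof (cases "Suc i \<le> a")
      case True
      then show ?thesis using xs(1,4) unfolding walk_def h_def a_def by auto
    next
      case False
      then have "a \<le> i" by simp
      then have "Suc i - a = Suc (i - a)" "i - a < b" using i by auto
      moreover have "E (ys!(i-a)) (ys!(Suc (i-a)))" using ys(1,4) \<open>i - a < b\<close> unfolding walk_def b_def by auto
      ultimately show ?thesis using False xa y0 unfolding h_def
        by (cases "i = a") auto
    qed
  qed
  have "h 0 \<in> V" using assms x0 unfolding h_def by simp
  from dist_le_fun[OF step this] have "d (h 0) (h (0 + (a+b))) \<le> a + b" .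
  moreover have "h 0 = u" using x0 unfolding h_def by simp
  moreover have "h (a+b) = w"
  proof (cases "b = 0")
    case True
    then have "y = w" using dist_0 assms unfolding b_def by blast
    then show ?thesis using True xa unfolding h_def by simp
  next
    case False then show ?thesis using yb unfolding h_def by simp
  qed
  ultimately show ?thesis unfolding a_def b_def by simp
qed

lemma dist_edge: assumes "E x y" "u \<in> V" shows "d u y \<le> Suc (d u x)"
  using dist_tri[of u x y] dist_edge_le[OF assms(1)] inV[OF assms(1)] assms(2) by simp

end


locale gv = grph +
  fixes r
  assumes rV: "r \<in> V" and gir: "girth_at_least V E 15"
begin

abbreviation lv where "lv x \<equiv> d r x"

definition geo :: "(nat \<Rightarrow> 'a) \<Rightarrow> nat \<Rightarrow> bool" where
  "geo f a \<longleftrightarrow> f 0 = r \<and> (\<forall>i<a. E (f i) (f (Suc i))) \<and> (\<forall>i\<le>a. f i \<in> V \<and> lv (f i) = i)"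

lemma geo_ex: assumes "x \<in> V" shows "\<exists>f. geo f (lv x) \<and> f (lv x) = x"
proof -
  obtain xs where xs: "walk V E xs" "hd xs = r" "last xs = x" "length xs = Suc (lv x)"
    using dist_ex[OF rV assms] by blast
  define f where "f i = xs ! i" for i
  have f0: "f 0 = r" using xs unfolding f_def by (metis hd_conv_nth list.size(3) nat.distinct(1))
  have fd: "f (lv x) = x" using xs unfolding f_def by (metis diff_Suc_1 last_conv_nth list.size(3) nat.distinct(1))
  have st: "\<forall>i<lv x. E (f i) (f (Suc i))" using xs(1,4) unfolding walk_def f_def by auto
  have fV: "f i \<in> V" if "i \<le> lv x" for i using xs(1,4) that unfolding walk_def f_def
    by (metis in_mono less_Suc_eq_le nth_mem)
  have "lv (f i) = i" if i: "i \<le> lv x" for i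
  proof -
    have "d (f 0) (f (0+i)) \<le> i" by (rule dist_le_fun) (use st i f0 rV in auto)
    moreover have "d (f i) (f (i + (lv x - i))) \<le> lv x - i" by (rule dist_le_fun) (use st i fV in auto)
    moreover have "lv x \<le> lv (f i) + d (f i) x" using dist_tri[OF rV fV[OF i] assms] .
    ultimately show ?thesis using i fd f0 by auto
  qed
  then show ?thesis using f0 fd st fV unfolding geo_def by blast
qed

lemma cyc:
  assumes gf: "geo f a" and gg: "geo g b" and e: "E (f a) (g b)"
    and j: "j < a" "j < b" "f j = g j"
    and ne: "\<forall>k. j < k \<longrightarrow> k \<le> a \<longrightarrow> k \<le> b \<longrightarrow> f k \<noteq> g k"
    and ab: "a + b \<le> 13"
  shows False
proof -
  define L where "L = (a - j + 1) + (b - j)"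
  define h where "h i = (if i \<le> a - j then f (j + i) else g (b + (a - j) + 1 - i))" for i
  have lvh1: "h i \<in> V \<and> lv (h i) = j + i" if "i \<le> a - j" for i
    using gf that j unfolding geo_def h_def by auto
  have lvh2: "h i \<in> V \<and> lv (h i) = b + (a - j) + 1 - i" "h i = g (b + (a - j) + 1 - i)"
    if "a - j < i" "i < L" for i
    using gg that j unfolding geo_def h_def L_def by auto
  have step: "\<forall>i<L - 1. E (h i) (h (Suc i))"
  proof (intro allI impI)
    fix i assume i: "i < L - 1"
    show "E (h i) (h (Suc i))"
    proof (cases "Suc i \<le> a - j")
      case True
      then show ?thesis using gf unfolding h_def geo_def by auto
    next
      case F: False
      show ?thesis
      proof (cases "i = a - j")
        case True
        then show ?thesis using e j unfolding h_def by auto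
      next
        case False
        then have ii: "a - j < i" using F by auto
        define k where "k = b + (a - j) - i"
        have k: "k < b" "b + (a - j) + 1 - i = Suc k" "b + (a - j) + 1 - Suc i = k"
          using ii i unfolding k_def L_def by auto
        have "E (g k) (g (Suc k))" using gg k unfolding geo_def by auto
        then show ?thesis using ii F k unfolding h_def by (auto intro: sym)
      qed
    qed
  qed
  have h0: "h 0 \<in> V" using lvh1[of 0] by simp
  have w: "walk V E (map h [0..<Suc (L - 1)])" by (rule walk_map[OF step h0])
  have LS: "Suc (L - 1) = L" unfolding L_def by simp
  have inj: "inj_on h {0..<L}"
  proof (rule inj_onI)
    fix x y assume x: "x \<in> {0..<L}" and y: "y \<in> {0..<L}" and hxy: "h x = h y"
    show "x = y"
    proof (cases "x \<le> a - j"; cases "y \<le> a - j")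
      assume "x \<le> a - j" "y \<le> a - j" then show ?thesis using lvh1 hxy by (metis add_left_cancel)
    next
      assume a1: "\<not> x \<le> a - j" "\<not> y \<le> a - j"
      then have "lv (h x) = b + (a - j) + 1 - x" "lv (h y) = b + (a - j) + 1 - y"
        using lvh2 x y by auto
      moreover have "x < a - j + 1 + (b - j)" "y < a - j + 1 + (b - j)" using x y unfolding L_def by auto
      moreover have "a - j + 1 + (b - j) \<le> b + (a - j) + 1" by simp
      ultimately show ?thesis using hxy
        by (metis diff_diff_cancel less_imp_le_nat order_less_le_trans)
    next
      assume a1: "x \<le> a - j" "\<not> y \<le> a - j"
      then have l1: "lv (h x) = j + x" and l2: "lv (h y) = b + (a - j) + 1 - y"
        and hy: "h y = g (b + (a - j) + 1 - y)" and hx: "h x = f (j + x)"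
        using lvh1 lvh2 y unfolding h_def by auto
      then have k: "b + (a - j) + 1 - y = j + x" using hxy by simp
      then have "f (j + x) = g (j + x)" using hx hy hxy by simp
      moreover have "j < j + x" "j + x \<le> a" "j + x \<le> b" using a1 y k j unfolding L_def by auto
      ultimately show ?thesis using ne by blast
    next
      assume a1: "\<not> x \<le> a - j" "y \<le> a - j"
      then have l1: "lv (h y) = j + y" and l2: "lv (h x) = b + (a - j) + 1 - x"
        and hy: "h x = g (b + (a - j) + 1 - x)" and hx: "h y = f (j + y)"
        using lvh1 lvh2 x unfolding h_def by auto
      then have k: "b + (a - j) + 1 - x = j + y" using hxy by simp
      then have "f (j + y) = g (j + y)" using hx hy hxy by simp
      moreover have "j < j + y" "j + y \<le> a" "j + y \<le> b" using a1 x k j unfolding L_def by auto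
      ultimately show ?thesis using ne by blast
    qed
  qed
  define cs where "cs = map h [0..<L]"
  have "is_cycle V E cs"
    unfolding is_cycle_def
  proof (intro conjI)
    show "3 \<le> length cs" unfolding cs_def L_def using j by auto
    show "distinct cs" unfolding cs_def using inj by (simp add: distinct_map)
    show "walk V E cs" using w LS unfolding cs_def by simp
    have "hd cs = g j" unfolding cs_def L_def h_def using j by (simp add: hd_map)
    moreover have "last cs = g (Suc j)"
    proof -
      have "L \<noteq> 0" unfolding L_def by simp
      then have "last cs = h (L - 1)" unfolding cs_def by (simp add: last_map)
      also have "\<dots> = g (Suc j)" unfolding h_def L_def using j by auto
      finally show ?thesis .
    qed
    moreover have "E (g j) (g (Suc j))" using gg j unfolding geo_def by auto
    ultimately show "E (last cs) (hd cs)" by (auto intro: sym)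
  qed
  then have "length cs \<ge> 15" using gir unfolding girth_at_least_def by blast
  moreover have "length cs \<le> 14" unfolding cs_def L_def using ab j by auto
  ultimately show False by simp
qed

end


context gv begin

lemma lv_edge: assumes "E x y" shows "lv y \<le> Suc (lv x)" "lv x \<le> Suc (lv y)"
  using dist_edge[OF assms rV] dist_edge[OF sym[OF assms] rV] by auto

lemma maxagree:
  fixes k :: nat
  assumes "f 0 = r" "g 0 = r" "f k \<noteq> g k"
  obtains j where "j < k" "f j = g j" "\<forall>i. j < i \<longrightarrow> i \<le> k \<longrightarrow> f i \<noteq> g i"
proof -
  define J where "J = {i. i \<le> k \<and> f i = g i}"
  have fin: "finite J" unfolding J_def by (rule finite_subset[of _ "{..k}"]) auto
  have "0 \<in> J" using assms unfolding J_def by simp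
  define j where "j = Max J"
  have jJ: "j \<in> J" unfolding j_def using fin \<open>0 \<in> J\<close> by (intro Max_in) auto
  have "\<forall>i. j < i \<longrightarrow> i \<le> k \<longrightarrow> f i \<noteq> g i"
    using Max_ge[OF fin] unfolding j_def J_def by fastforce
  moreover have "j < k" using jJ assms(3) unfolding J_def by (cases "j = k") auto
  ultimately show ?thesis using that jJ unfolding J_def by blast
qed

lemma same_level:
  assumes e: "E x y" and lx: "lv x = k" and ly: "lv y = k" and k: "k \<le> 6"
  shows False
proof -
  have xV: "x \<in> V" and yV: "y \<in> V" using inV[OF e] by auto
  obtain f where f: "geo f k" "f k = x" using geo_ex[OF xV] lx by auto
  obtain g where g: "geo g k" "g k = y" using geo_ex[OF yV] ly by auto
  have "x \<noteq> y" using e irr by auto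
  then obtain j where j: "j < k" "f j = g j" "\<forall>i. j < i \<longrightarrow> i \<le> k \<longrightarrow> f i \<noteq> g i"
    using maxagree[of f g k] f g unfolding geo_def by auto
  show False
    by (rule cyc[OF f(1) g(1) _ j(1) j(1) j(2)]) (use e f g j k in auto)
qed

lemma unique_parent:
  assumes ep: "E p x" and eq: "E q x" and lx: "lv x = Suc e" and lp: "lv p = e" and lq: "lv q = e"
    and le: "e \<le> 6"
  shows "p = q"
proof (rule ccontr)
  assume pq: "p \<noteq> q"
  have pV: "p \<in> V" and qV: "q \<in> V" and xV: "x \<in> V" using inV ep eq by auto
  obtain f where f: "geo f e" "f e = p" using geo_ex[OF pV] lp by auto
  obtain g where g: "geo g e" "g e = q" using geo_ex[OF qV] lq by auto
  define f' where "f' = f(Suc e := x)"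
  have f': "geo f' (Suc e)" using f ep xV lx unfolding geo_def f'_def
    by (auto simp: less_Suc_eq le_Suc_eq)
  obtain j where j: "j < e" "f j = g j" "\<forall>i. j < i \<longrightarrow> i \<le> e \<longrightarrow> f i \<noteq> g i"
    using maxagree[of f g e] f g pq unfolding geo_def by auto
  show False
    by (rule cyc[OF f' g(1), of j]) (use eq f g j le in \<open>auto simp: f'_def intro: sym\<close>)
qed

end


context grph begin

definition H where "H x y \<longleftrightarrow> (\<exists>z. E x z \<and> E y z)"

lemma op_pair: "open_packing V E P \<Longrightarrow> p \<in> P \<Longrightarrow> q \<in> P \<Longrightarrow> p \<noteq> q \<Longrightarrow> \<not> H p q"
  unfolding open_packing_def H_def by blast

lemma op_sub: "open_packing V E P \<Longrightarrow> P \<subseteq> V" unfolding open_packing_def by blast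

lemma extend:
  assumes "open_packing V E J"
  shows "\<exists>P. maximal_open_packing V E P \<and> J \<subseteq> P"
proof -
  define S where "S = {Q. open_packing V E Q \<and> J \<subseteq> Q}"
  have "S \<subseteq> Pow V" using op_sub unfolding S_def by blast
  then have finS: "finite S" using finV finite_subset by (metis finite_Pow_iff)
  have "J \<in> S" using assms unfolding S_def by auto
  have fc: "finite (card ` S)" using finS by simp
  have ne: "card ` S \<noteq> {}" using \<open>J \<in> S\<close> by blast
  have "Max (card ` S) \<in> card ` S" by (rule Max_in[OF fc ne])
  then obtain P where P1: "P \<in> S" "card P = Max (card ` S)" by (metis imageE)
  have P2: "\<forall>Q\<in>S. card Q \<le> card P"
  proof
    fix Q assume "Q \<in> S"
    then have "card Q \<in> card ` S" by (rule imageI)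
    from Max_ge[OF fc this] P1 show "card Q \<le> card P" by simp
  qed
  note P = P1(1) P2
  have "maximal_open_packing V E P"
    unfolding maximal_open_packing_def
  proof (intro conjI allI impI)
    show "open_packing V E P" using P unfolding S_def by auto
    fix Q assume Q: "open_packing V E Q \<and> P \<subseteq> Q"
    then have "Q \<in> S" using P unfolding S_def by auto
    then have "card Q \<le> card P" using P by auto
    moreover have "finite Q" using Q op_sub finV finite_subset by blast
    ultimately have "P = Q" using Q card_seteq[of Q P] by blast
    then show "Q = P" by simp
  qed
  then show ?thesis using P unfolding S_def by auto
qed

lemma U_bad:
  assumes U: "in_U V E" and P: "maximal_open_packing V E P" and Q: "open_packing V E Q"
    and lt: "card P < card Q"
  shows False
proof -
  have "{P. maximal_open_packing V E P} \<subseteq> Pow V"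
    using op_sub unfolding maximal_open_packing_def by blast
  then have f1: "finite {P. maximal_open_packing V E P}" using finV finite_subset by (metis finite_Pow_iff)
  have "{P. open_packing V E P} \<subseteq> Pow V" using op_sub by blast
  then have f2: "finite {P. open_packing V E P}" using finV finite_subset by (metis finite_Pow_iff)
  have "P \<in> {P. maximal_open_packing V E P}" using P by simp
  then have "card P \<in> card ` {P. maximal_open_packing V E P}" by (rule imageI)
  then have "lower_open_packing_number V E \<le> card P"
    unfolding lower_open_packing_number_def by (rule Min_le[OF finite_imageI[OF f1]])
  moreover have "Q \<in> {P. open_packing V E P}" using Q by simp
  then have "card Q \<in> card ` {P. open_packing V E P}" by (rule imageI)
  then have "card Q \<le> open_packing_number V E"
    unfolding open_packing_number_def by (rule Max_ge[OF finite_imageI[OF f2]])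
  ultimately show False using U lt unfolding in_U_def by simp
qed

lemma swap:
  assumes U: "in_U V E" and P: "maximal_open_packing V E P" and a: "a \<in> P"
    and b: "b \<notin> P" "b \<in> V" and c: "c \<notin> P" "c \<in> V" and bc: "b \<noteq> c" "\<not> H b c"
    and bp: "\<forall>p\<in>P - {a}. \<not> H b p" and cp: "\<forall>p\<in>P - {a}. \<not> H c p"
  shows False
proof -
  have opP: "open_packing V E P" using P unfolding maximal_open_packing_def by auto
  define Q where "Q = insert b (insert c (P - {a}))"
  have "open_packing V E Q"
    unfolding open_packing_def
  proof (intro conjI ballI impI)
    show "Q \<subseteq> V" using op_sub[OF opP] b c unfolding Q_def by auto
    fix u w assume u: "u \<in> Q" and w: "w \<in> Q" and uw: "u \<noteq> w"
    have Hs: "H x y \<Longrightarrow> H y x" for x y unfolding H_def by blast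
    have u': "u = b \<or> u = c \<or> u \<in> P - {a}" using u unfolding Q_def by auto
    have w': "w = b \<or> w = c \<or> w \<in> P - {a}" using w unfolding Q_def by auto
    have "\<not> H u w"
      using u' w' uw op_pair[OF opP, of u w] bp cp bc Hs[of u w] Hs[of w u]
      by (elim disjE) auto
    then show "\<not> (\<exists>x. E u x \<and> E w x)" unfolding H_def .
  qed
  moreover have "card P < card Q"
  proof -
    have fP: "finite P" using op_sub[OF opP] finV finite_subset by blast
    have f1: "finite (P - {a})" using fP by simp
    have n1: "c \<notin> P - {a}" using c by simp
    have n2: "b \<notin> insert c (P - {a})" using b bc by simp
    have e1: "card Q = Suc (card (insert c (P - {a})))" unfolding Q_def
      by (rule card_insert_disjoint) (use f1 n2 in auto)
    have e2: "card (insert c (P - {a})) = Suc (card (P - {a}))" by (rule card_insert_disjoint[OF f1 n1])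
    have e3: "card (P - {a}) = card P - 1" using a by (rule card_Diff_singleton)
    have e4: "card P \<noteq> 0" using a fP by auto
    show ?thesis using e1 e2 e3 e4 by linarith
  qed
  ultimately show False by (rule U_bad[OF U P])
qed


lemma leaf_nb: assumes "leaf V E l" "E l a" "E l b" shows "a = b"
proof -
  have "card (nbhd V E l) = 1" using assms unfolding leaf_def degree_def by auto
  then obtain q where "nbhd V E l = {q}" by (rule card_1_singletonE)
  moreover have "a \<in> nbhd V E l" "b \<in> nbhd V E l" using assms inV unfolding nbhd_def by auto
  ultimately show ?thesis by auto
qed

lemma nonleaf: assumes "x \<in> V" "E x y" "\<not> leaf V E x" shows "\<exists>z. E x z \<and> z \<noteq> y"
proof (rule ccontr)
  assume "\<not> (\<exists>z. E x z \<and> z \<noteq> y)"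
  then have n: "\<And>z. E x z \<Longrightarrow> z = y" by blast
  have "nbhd V E x = {y}"
  proof (rule set_eqI)
    fix z show "z \<in> nbhd V E x \<longleftrightarrow> z \<in> {y}"
      unfolding nbhd_def using n assms(2) inV[OF assms(2)] by blast
  qed
  then have "degree V E x = 1" unfolding degree_def by simp
  then show False using assms(1,3) unfolding leaf_def by simp
qed

lemma two_nb_nonleaf: assumes "E x a" "E x b" "a \<noteq> b" shows "\<not> leaf V E x"
  using leaf_nb assms by blast

lemma lemmaA:
  assumes U: "in_U V E" and ca: "E c a" and cb: "E c b" and ab: "a \<noteq> b"
    and sa: "support V E a" and sb: "support V E b"
  shows False
proof -
  obtain la where la: "E a la" "leaf V E la" using sa unfolding support_def by auto
  obtain lb where lb: "E b lb" "leaf V E lb" using sb unfolding support_def by auto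
  have laa: "\<And>z. E la z \<Longrightarrow> z = a" using leaf_nb[OF la(2)] la(1) sym by blast
  have lbb: "\<And>z. E lb z \<Longrightarrow> z = b" using leaf_nb[OF lb(2)] lb(1) sym by blast
  have cV: "c \<in> V" using inV ca by auto
  have "open_packing V E {c}" unfolding open_packing_def using cV by auto
  then obtain P where P: "maximal_open_packing V E P" "{c} \<subseteq> P" using extend by blast
  have opP: "open_packing V E P" using P unfolding maximal_open_packing_def by auto
  have lac: "la \<noteq> c" using leaf_nb[OF la(2)] ca cb ab by blast
  have lbc: "lb \<noteq> c" using leaf_nb[OF lb(2)] ca cb ab by blast
  have "H la c" unfolding H_def using la ca sym by blast
  then have laP: "la \<notin> P" using op_pair[OF opP, of la c] P lac by auto
  have "H lb c" unfolding H_def using lb cb sym by blast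
  then have lbP: "lb \<notin> P" using op_pair[OF opP, of lb c] P lbc by auto
  show False
  proof (rule swap[OF U P(1), of c la lb])
    show "c \<in> P" using P by auto
    show "la \<notin> P" "lb \<notin> P" by fact+
    show "la \<in> V" "lb \<in> V" using la lb inV by auto
    show "la \<noteq> lb" using leaf_nb[OF la(2) sym[OF la(1)]] sym[OF lb(1)] ab by blast
    show "\<not> H la lb" unfolding H_def using laa lbb ab by blast
    show "\<forall>p\<in>P - {c}. \<not> H la p"
    proof
      fix p assume p: "p \<in> P - {c}"
      show "\<not> H la p"
      proof
        assume "H la p"
        then have "E p a" unfolding H_def using laa by blast
        then have "H p c" unfolding H_def using ca by blast
        then show False using op_pair[OF opP, of p c] p P by auto
      qed
    qed
    show "\<forall>p\<in>P - {c}. \<not> H lb p"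
    proof
      fix p assume p: "p \<in> P - {c}"
      show "\<not> H lb p"
      proof
        assume "H lb p"
        then have "E p b" unfolding H_def using lbb by blast
        then have "H p c" unfolding H_def using cb by blast
        then show False using op_pair[OF opP, of p c] p P by auto
      qed
    qed
  qed
qed

end


context gv begin

lemma lvV: "x \<in> V \<Longrightarrow> x \<noteq> r \<Longrightarrow> lv x \<noteq> 0" using dist_0 rV by blast
lemma lvr: "lv r = 0" using dist_refl rV by simp
lemma lv1: "x \<in> V \<Longrightarrow> lv x = 1 \<longleftrightarrow> E r x" using dist_1_iff rV by blast

lemma Ind:
  assumes L: "L \<le> 4" and lx: "lv x = L" "lv x' = L" and e: "E x z" "E z u" "E x' z'" "E z' u'"
    and lu: "lv u = L + 2" "lv u' = L + 2" and h: "H u u'"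
  shows "u = u' \<or> x = x'"
proof -
  have lz: "lv z = L + 1" using lv_edge[OF e(1)] lv_edge[OF e(2)] lx lu by auto
  have lz': "lv z' = L + 1" using lv_edge[OF e(3)] lv_edge[OF e(4)] lx lu by auto
  obtain c where c: "E u c" "E u' c" using h unfolding H_def by blast
  have "lv c \<le> L + 3" "L + 1 \<le> lv c" using lv_edge[OF c(1)] lu by auto
  then consider "lv c = L + 1" | "lv c = L + 2" | "lv c = L + 3" by linarith
  then show ?thesis
  proof cases
    case 1
    have "c = z" using unique_parent[OF sym[OF c(1)] e(2), of "L+1"] 1 lz lu L by auto
    moreover have "c = z'" using unique_parent[OF sym[OF c(2)] e(4), of "L+1"] 1 lz' lu L by auto
    ultimately have "E x' z" using e by simp
    then have "x = x'" using unique_parent[OF e(1), of x' L] lz lx L by auto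
    then show ?thesis by simp
  next
    case 2 then show ?thesis using same_level[OF c(1)] lu L by auto
  next
    case 3 then show ?thesis using unique_parent[OF c(1) c(2), of "L+2"] lu L by auto
  qed
qed

lemma exist:
  assumes U: "in_U V E" and hS: "\<And>t. support V E t \<Longrightarrow> 2 \<le> lv t"
    and s: "support V E s" "lv s = 2"
    and no: "\<And>s'. single_star_support V E s' \<Longrightarrow> lv s' \<noteq> 2"
  shows False
proof -
  have sV: "s \<in> V" using s unfolding support_def by auto
  obtain w where w: "E r w" "E w s" using dist_2_mid[OF rV sV] s by auto
  have lw: "lv w = 1" using lv1 w inV by auto
  obtain t where t: "E s t" "support V E t"
    using no[of s] s unfolding single_star_support_def by auto
  have lt: "lv t = 3"
  proof -
    have "lv t \<le> 3" "2 \<le> lv t" using lv_edge[OF t(1)] s hS[OF t(2)] by auto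
    moreover have "lv t \<noteq> 2" using same_level[OF t(1)] s by auto
    ultimately show ?thesis by auto
  qed
  obtain m where m: "E t m" "leaf V E m" using t unfolding support_def by auto
  have mt: "\<And>c. E m c \<Longrightarrow> c = t" using leaf_nb[OF m(2)] m(1) sym by blast
  have wt: "w \<noteq> t" using lw lt by auto
  have lm: "lv m = 4"
  proof -
    have "lv m \<le> 4" "2 \<le> lv m" using lv_edge[OF m(1)] lt by auto
    moreover have "lv m \<noteq> 3" using same_level[OF m(1)] lt by auto
    moreover have "lv m \<noteq> 2"
    proof
      assume "lv m = 2"
      then have "s = m" using unique_parent[OF t(1) sym[OF m(1)], of 2] lt s by auto
      then show False using two_nb_nonleaf[OF sym[OF w(2)] t(1) wt] m by simp
    qed
    ultimately show ?thesis by auto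
  qed
  define Y where "Y = {x \<in> V. x \<noteq> r \<and> x \<noteq> s \<and> H r x \<and> \<not> H x s}"
  have Yl: "lv x = 2 \<and> (\<exists>z u. E x z \<and> E z u \<and> lv u = 4)" if xY: "x \<in> Y" for x
  proof -
    have xV: "x \<in> V" and xr: "x \<noteq> r" and xs: "x \<noteq> s" and hx: "H r x" and nh: "\<not> H x s"
      using xY unfolding Y_def by auto
    obtain w' where w': "E r w'" "E x w'" using hx unfolding H_def by auto
    have lw': "lv w' = 1" using lv1 w' inV by auto
    have lx: "lv x = 2"
    proof -
      have "lv x \<le> 2" using lv_edge[OF w'(2)] lw' by auto
      moreover have "lv x \<noteq> 0" using lvV xV xr by auto
      moreover have "lv x \<noteq> 1" using same_level[OF w'(2)] lw' by auto
      ultimately show ?thesis by auto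
    qed
    have nlx: "\<not> leaf V E x"
    proof
      assume "leaf V E x"
      then have "support V E w'" using w' inV sym unfolding support_def by blast
      then show False using hS lw' by fastforce
    qed
    obtain z where z: "E x z" "z \<noteq> w'" "\<not> leaf V E z"
    proof (rule ccontr)
      assume nz: "\<not> thesis"
      have lf: "\<And>z. E x z \<Longrightarrow> z \<noteq> w' \<Longrightarrow> leaf V E z" using nz that by blast
      have "single_star_support V E x"
        unfolding single_star_support_def
      proof (intro conjI allI impI)
        obtain z where "E x z" "z \<noteq> w'" using nonleaf[OF xV w'(2) nlx] by blast
        then show "support V E x" using lf xV unfolding support_def by blast
      next
        fix u assume xu: "E x u"
        show "\<not> support V E u"
        proof
          assume su: "support V E u"
          show False
          proof (cases "u = w'")
            case True then show False using hS su lw' by fastforce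
          next
            case False
            then have lu: "leaf V E u" using lf xu by blast
            obtain l where "E u l" "leaf V E l" using su unfolding support_def by auto
            then have "l = x" using leaf_nb[OF lu] sym[OF xu] by blast
            then show False using nlx \<open>leaf V E l\<close> by simp
          qed
        qed
      qed
      then show False using no lx by blast
    qed
    have lz: "lv z = 3"
    proof -
      have "lv z \<le> 3" "1 \<le> lv z" using lv_edge[OF z(1)] lx by auto
      moreover have "lv z \<noteq> 2" using same_level[OF z(1)] lx by auto
      moreover have "lv z \<noteq> 1" using unique_parent[OF sym[OF w'(2)] sym[OF z(1)], of 1] lx lw' z(2) by auto
      ultimately show ?thesis by auto
    qed
    obtain u where u: "E z u" "u \<noteq> x" using nonleaf[OF _ sym[OF z(1)] z(3)] inV z by blast
    have lu: "lv u = 4"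
    proof -
      have "lv u \<le> 4" "2 \<le> lv u" using lv_edge[OF u(1)] lz by auto
      moreover have "lv u \<noteq> 3" using same_level[OF u(1)] lz by auto
      moreover have "lv u \<noteq> 2" using unique_parent[OF z(1) sym[OF u(1)], of 2] lz lx u(2) by auto
      ultimately show ?thesis by auto
    qed
    show ?thesis using lx z u lu by blast
  qed
  define uf where "uf x = (SOME u. \<exists>z. E x z \<and> E z u \<and> lv u = 4)" for x
  have uf: "\<exists>z. E x z \<and> E z (uf x) \<and> lv (uf x) = 4" if "x \<in> Y" for x
    unfolding uf_def by (rule someI_ex) (use Yl[OF that] in blast)
  have ufV: "uf x \<in> V" if "x \<in> Y" for x using uf[OF that] inV by blast
  define J where "J = insert s (uf ` Y)"
  have opJ: "open_packing V E J"
    unfolding open_packing_def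
  proof (intro conjI ballI impI)
    show "J \<subseteq> V" using sV ufV unfolding J_def by auto
    have A: "uf x \<noteq> s \<and> \<not> H (uf x) s" if xY: "x \<in> Y" for x
    proof
      show "uf x \<noteq> s" using uf[OF xY] s by auto
      show "\<not> H (uf x) s"
      proof
        assume "H (uf x) s"
        then obtain c where c: "E (uf x) c" "E s c" unfolding H_def by auto
        obtain z where z: "E x z" "E z (uf x)" "lv (uf x) = 4" using uf[OF xY] by blast
        have lx: "lv x = 2" using Yl[OF xY] by simp
        have lz: "lv z = 3" using lv_edge[OF z(1)] lv_edge[OF z(2)] lx z(3) by auto
        have "lv c = 3" using lv_edge[OF c(1)] lv_edge[OF c(2)] z(3) s by auto
        then have "c = z" using unique_parent[OF sym[OF c(1)] z(2), of 3] z lz by auto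
        then have "x = s" using unique_parent[OF z(1), of s 2] c lz lx s by auto
        then show False using xY unfolding Y_def by auto
      qed
    qed
    fix a b assume a: "a \<in> J" and b: "b \<in> J" and ab: "a \<noteq> b"
    have Hs: "H p q \<Longrightarrow> H q p" for p q unfolding H_def by blast
    have "\<not> H a b"
    proof (cases "a = s \<or> b = s")
      case True
      then show ?thesis using a b ab A Hs unfolding J_def by blast
    next
      case False
      then obtain x x' where x: "x \<in> Y" "a = uf x" and x': "x' \<in> Y" "b = uf x'"
        using a b unfolding J_def by auto
      show ?thesis
      proof
        assume h: "H a b"
        obtain z where z: "E x z" "E z (uf x)" "lv (uf x) = 4" using uf[OF x(1)] by blast
        obtain z' where z': "E x' z'" "E z' (uf x')" "lv (uf x') = 4" using uf[OF x'(1)] by blast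
        have "uf x = uf x' \<or> x = x'"
          by (rule Ind[of 2 x x' z "uf x" z' "uf x'"]) (use z z' h x x' Yl in auto)
        then show False using x x' ab by auto
      qed
    qed
    then show "\<not> (\<exists>x. E a x \<and> E b x)" unfolding H_def .
  qed
  obtain P where P: "maximal_open_packing V E P" "J \<subseteq> P" using extend[OF opJ] by blast
  have opP: "open_packing V E P" using P unfolding maximal_open_packing_def by auto
  have sP: "s \<in> P" using P unfolding J_def by auto
  have rs: "r \<noteq> s" using s lvr by auto
  have ms: "m \<noteq> s" using s lm by auto
  have rP: "r \<notin> P"
  proof
    assume "r \<in> P"
    moreover have "H r s" unfolding H_def using w sym by blast
    ultimately show False using op_pair[OF opP _ sP rs] by blast
  qed
  have mP: "m \<notin> P"
  proof
    assume "m \<in> P"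
    moreover have "H m s" unfolding H_def using m t sym by blast
    ultimately show False using op_pair[OF opP _ sP ms] by blast
  qed
  show False
  proof (rule swap[OF U P(1) sP rP rV mP])
    show "m \<in> V" using m inV by auto
    show "r \<noteq> m" using lm lvr by auto
    show "\<not> H r m"
    proof
      assume "H r m"
      then obtain c where "E r c" "E m c" unfolding H_def by auto
      then have "E r t" using mt by blast
      then show False using lv1 lt inV by fastforce
    qed
    show "\<forall>p\<in>P - {s}. \<not> H r p"
    proof
      fix p assume p: "p \<in> P - {s}"
      show "\<not> H r p"
      proof
        assume h: "H r p"
        have "p \<noteq> r" using p rP by auto
        moreover have "\<not> H p s" using op_pair[OF opP _ sP] p by auto
        moreover have "p \<in> V" using p op_sub[OF opP] by auto
        ultimately have pY: "p \<in> Y" using h p unfolding Y_def by auto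
        then have "uf p \<in> P" using P unfolding J_def by auto
        moreover obtain z where z: "E p z" "E z (uf p)" "lv (uf p) = 4" using uf[OF pY] by blast
        moreover have "p \<noteq> uf p" using Yl[OF pY] z by auto
        moreover have "H p (uf p)" unfolding H_def using z sym by blast
        ultimately show False using op_pair[OF opP] p by blast
      qed
    qed
    show "\<forall>p\<in>P - {s}. \<not> H m p"
    proof
      fix p assume p: "p \<in> P - {s}"
      show "\<not> H m p"
      proof
        assume "H m p"
        then obtain c where "E m c" "E p c" unfolding H_def by auto
        then have "E p t" using mt by blast
        then have "H p s" unfolding H_def using t sym by blast
        then show False using op_pair[OF opP _ sP] p by auto
      qed
    qed
  qed
qed

end


context gv begin

lemma Ystep:
  assumes U: "in_U V E" and hS: "\<And>t. support V E t \<Longrightarrow> 2 \<le> lv t"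
    and ss: "single_star_support V E s" and ls: "lv s = 2"
    and xV: "x \<in> V" and xs: "x \<noteq> s" and ey: "E x y" "E s y" and nh: "\<not> H x r"
  shows "lv x = 4 \<and> (\<exists>z u. E x z \<and> E z u \<and> lv u = 6)"
proof -
  have sup: "support V E s" and nsup: "\<And>u. E s u \<Longrightarrow> \<not> support V E u"
    using ss unfolding single_star_support_def by auto
  have yV: "y \<in> V" using inV ey by auto
  have ly: "lv y = 3"
  proof -
    have "lv y \<le> 3" "1 \<le> lv y" using lv_edge[OF ey(2)] ls by auto
    moreover have "lv y \<noteq> 2" using same_level[OF ey(2)] ls by auto
    moreover have "lv y \<noteq> 1"
    proof
      assume "lv y = 1"
      then have "E r y" using lv1 yV by auto
      then show False using nh ey unfolding H_def by (blast intro: sym)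
    qed
    ultimately show ?thesis by auto
  qed
  have lx: "lv x = 4"
  proof -
    have "lv x \<le> 4" "2 \<le> lv x" using lv_edge[OF ey(1)] ly by auto
    moreover have "lv x \<noteq> 3" using same_level[OF ey(1)] ly by auto
    moreover have "lv x \<noteq> 2" using unique_parent[OF ey(1) ey(2), of 2] ly ls xs by auto
    ultimately show ?thesis by auto
  qed
  have nlx: "\<not> leaf V E x"
  proof
    assume "leaf V E x"
    then have "support V E y" using ey yV sym unfolding support_def by blast
    then show False using nsup ey by blast
  qed
  obtain z where z: "E x z" "z \<noteq> y" "\<not> leaf V E z"
  proof (rule ccontr)
    assume nz: "\<not> thesis"
    have lf: "\<And>z. E x z \<Longrightarrow> z \<noteq> y \<Longrightarrow> leaf V E z" using nz that by blast
    obtain z where "E x z" "z \<noteq> y" using nonleaf[OF xV ey(1) nlx] by blast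
    then have "support V E x" using lf xV unfolding support_def by blast
    moreover have "x \<noteq> s" by fact
    ultimately show False using lemmaA[OF U sym[OF ey(2)] sym[OF ey(1)] xs[symmetric] sup] by blast
  qed
  have lz: "lv z = 5"
  proof -
    have "lv z \<le> 5" "3 \<le> lv z" using lv_edge[OF z(1)] lx by auto
    moreover have "lv z \<noteq> 4" using same_level[OF z(1)] lx by auto
    moreover have "lv z \<noteq> 3" using unique_parent[OF sym[OF ey(1)] sym[OF z(1)], of 3] lx ly z(2) by auto
    ultimately show ?thesis by auto
  qed
  obtain u where u: "E z u" "u \<noteq> x" using nonleaf[OF _ sym[OF z(1)] z(3)] inV z by blast
  have lu: "lv u = 6"
  proof -
    have "lv u \<le> 6" "4 \<le> lv u" using lv_edge[OF u(1)] lz by auto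
    moreover have "lv u \<noteq> 5" using same_level[OF u(1)] lz by auto
    moreover have "lv u \<noteq> 4" using unique_parent[OF z(1) sym[OF u(1)], of 4] lz lx u(2) by auto
    ultimately show ?thesis by auto
  qed
  show ?thesis using lx z u lu by blast
qed

lemma uniq:
  assumes U: "in_U V E" and hS: "\<And>t. support V E t \<Longrightarrow> 2 \<le> lv t"
    and s1: "single_star_support V E s1" "lv s1 = 2"
    and s2: "single_star_support V E s2" "lv s2 = 2"
    and ne: "s1 \<noteq> s2"
  shows False
proof -
  have s1V: "s1 \<in> V" and s2V: "s2 \<in> V" and sup1: "support V E s1" and sup2: "support V E s2"
    using s1 s2 unfolding single_star_support_def support_def by auto
  obtain w1 where w1: "E r w1" "E w1 s1" using dist_2_mid[OF rV s1V] s1 by auto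
  obtain w2 where w2: "E r w2" "E w2 s2" using dist_2_mid[OF rV s2V] s2 by auto
  have nh12: "\<not> H s1 s2"
  proof
    assume "H s1 s2"
    then obtain c where "E s1 c" "E s2 c" unfolding H_def by auto
    then show False using lemmaA[OF U _ _ ne sup1 sup2] sym by blast
  qed
  define Y where "Y = {x \<in> V. x \<noteq> r \<and> \<not> H x r \<and> ((x \<noteq> s1 \<and> H x s1) \<or> (x \<noteq> s2 \<and> H x s2))}"
  have Yl: "lv x = 4 \<and> (\<exists>z u. E x z \<and> E z u \<and> lv u = 6)" if xY: "x \<in> Y" for x
  proof -
    have xV: "x \<in> V" and nh: "\<not> H x r" using xY unfolding Y_def by auto
    from xY consider "x \<noteq> s1" "H x s1" | "x \<noteq> s2" "H x s2" unfolding Y_def by auto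
    then show ?thesis
    proof cases
      case 1
      then obtain y where "E x y" "E s1 y" unfolding H_def by auto
      then show ?thesis using Ystep[OF U hS s1 xV 1(1) _ _ nh] by blast
    next
      case 2
      then obtain y where "E x y" "E s2 y" unfolding H_def by auto
      then show ?thesis using Ystep[OF U hS s2 xV 2(1) _ _ nh] by blast
    qed
  qed
  define uf where "uf x = (SOME u. \<exists>z. E x z \<and> E z u \<and> lv u = 6)" for x
  have uf: "\<exists>z. E x z \<and> E z (uf x) \<and> lv (uf x) = 6" if "x \<in> Y" for x
    unfolding uf_def by (rule someI_ex) (use Yl[OF that] in blast)
  have ufV: "uf x \<in> V" if "x \<in> Y" for x using uf[OF that] inV by blast
  define J where "J = insert r (uf ` Y)"
  have opJ: "open_packing V E J"
    unfolding open_packing_def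
  proof (intro conjI ballI impI)
    show "J \<subseteq> V" using rV ufV unfolding J_def by auto
    have A: "uf x \<noteq> r \<and> \<not> H (uf x) r" if xY: "x \<in> Y" for x
    proof
      show "uf x \<noteq> r" using uf[OF xY] lvr by auto
      show "\<not> H (uf x) r"
      proof
        assume "H (uf x) r"
        then obtain c where c: "E (uf x) c" "E r c" unfolding H_def by auto
        have "lv c = 1" using lv1 c inV by auto
        then show False using lv_edge[OF c(1)] uf[OF xY] by auto
      qed
    qed
    fix a b assume a: "a \<in> J" and b: "b \<in> J" and ab: "a \<noteq> b"
    have Hs: "H p q \<Longrightarrow> H q p" for p q unfolding H_def by blast
    have "\<not> H a b"
    proof (cases "a = r \<or> b = r")
      case True
      then show ?thesis using a b ab A Hs unfolding J_def by blast
    next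
      case False
      then obtain x x' where x: "x \<in> Y" "a = uf x" and x': "x' \<in> Y" "b = uf x'"
        using a b unfolding J_def by auto
      show ?thesis
      proof
        assume h: "H a b"
        obtain z where z: "E x z" "E z (uf x)" "lv (uf x) = 6" using uf[OF x(1)] by blast
        obtain z' where z': "E x' z'" "E z' (uf x')" "lv (uf x') = 6" using uf[OF x'(1)] by blast
        have "uf x = uf x' \<or> x = x'"
          by (rule Ind[of 4 x x' z "uf x" z' "uf x'"]) (use z z' h x x' Yl in auto)
        then show False using x x' ab by auto
      qed
    qed
    then show "\<not> (\<exists>x. E a x \<and> E b x)" unfolding H_def .
  qed
  obtain P where P: "maximal_open_packing V E P" "J \<subseteq> P" using extend[OF opJ] by blast
  have opP: "open_packing V E P" using P unfolding maximal_open_packing_def by auto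
  have rP: "r \<in> P" using P unfolding J_def by auto
  have s1r: "s1 \<noteq> r" using s1 lvr by auto
  have s2r: "s2 \<noteq> r" using s2 lvr by auto
  have s1P: "s1 \<notin> P"
  proof
    assume "s1 \<in> P"
    moreover have "H s1 r" unfolding H_def using w1 sym by blast
    ultimately show False using op_pair[OF opP _ rP s1r] by blast
  qed
  have s2P: "s2 \<notin> P"
  proof
    assume "s2 \<in> P"
    moreover have "H s2 r" unfolding H_def using w2 sym by blast
    ultimately show False using op_pair[OF opP _ rP s2r] by blast
  qed
  have key: "\<not> H si p" if si: "si = s1 \<or> si = s2" and sP: "si \<notin> P" and p: "p \<in> P - {r}" for si p
  proof
    assume h: "H si p"
    have "p \<noteq> r" using p by auto
    moreover have "\<not> H p r" using op_pair[OF opP _ rP] p by auto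
    moreover have "p \<in> V" using p op_sub[OF opP] by auto
    moreover have "p \<noteq> si" using p sP by auto
    moreover have "H p si" using h unfolding H_def by blast
    ultimately have pY: "p \<in> Y" using si unfolding Y_def by auto
    then have "uf p \<in> P" using P unfolding J_def by auto
    moreover obtain z where z: "E p z" "E z (uf p)" "lv (uf p) = 6" using uf[OF pY] by blast
    moreover have "p \<noteq> uf p" using Yl[OF pY] z by auto
    moreover have "H p (uf p)" unfolding H_def using z sym by blast
    ultimately show False using op_pair[OF opP] p by blast
  qed
  show False
  proof (rule swap[OF U P(1) rP s1P s1V s2P s2V ne nh12])
    show "\<forall>p\<in>P - {r}. \<not> H s1 p" using key s1P by blast
    show "\<forall>p\<in>P - {r}. \<not> H s2 p" using key s2P by blast
  qed
qed

end


theorem lemma6: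
  fixes V :: "'a set" and E :: "'a \<Rightarrow> 'a \<Rightarrow> bool"
  assumes "graph V E" and "V \<noteq> {}" and "connected V E"
    and "min_degree V E = 1"
    and "girth_at_least V E 15"
    and "in_U V E"
    and "v \<in> V" and "dist_set V E v (support_set V E) = 2"
  shows "\<exists>!s. s \<in> V \<and> single_star_support V E s \<and> dist V E v s = 2"
proof -
  interpret gv V E v using assms unfolding gv_def grph_def gv_axioms_def by auto
  define S where "S = support_set V E"
  have finS: "finite S" unfolding S_def support_set_def using finV by simp
  have "Min (degree V E ` V) \<in> degree V E ` V"
    using finV assms(2) by (intro Min_in) auto
  then obtain x where xV: "x \<in> V" and dx: "degree V E x = 1"
    using assms(4) unfolding min_degree_def by (metis imageE)
  then have lx: "leaf V E x" unfolding leaf_def by simp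
  have "card (nbhd V E x) = 1" using dx unfolding degree_def .
  then obtain y where "nbhd V E x = {y}" by (rule card_1_singletonE)
  then have xy: "E x y" unfolding nbhd_def by auto
  then have "support V E y" unfolding support_def using lx inV sym by blast
  then have yS: "y \<in> S" unfolding S_def support_set_def using inV xy by auto
  have fin2: "finite (dist V E v ` S)" using finS by simp
  have ne2: "dist V E v ` S \<noteq> {}" using yS by blast
  have hS: "2 \<le> dist V E v t" if "support V E t" for t
  proof -
    have "t \<in> S" using that unfolding S_def support_set_def support_def by auto
    then have "Min (dist V E v ` S) \<le> dist V E v t" using fin2 by (intro Min_le) auto
    then show ?thesis using assms(8) unfolding dist_set_def S_def by simp
  qed
  have "Min (dist V E v ` S) \<in> dist V E v ` S" by (rule Min_in[OF fin2 ne2])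
  then obtain s where sS: "s \<in> S" and ls: "dist V E v s = 2"
    using assms(8) unfolding dist_set_def S_def by (metis imageE)
  have sup: "support V E s" using sS unfolding S_def support_set_def by auto
  show ?thesis
  proof (rule ex_ex1I)
    show "\<exists>s. s \<in> V \<and> single_star_support V E s \<and> dist V E v s = 2"
    proof (rule ccontr)
      assume na: "\<not> ?thesis"
      have no: "dist V E v s' \<noteq> 2" if "single_star_support V E s'" for s'
        using na that unfolding single_star_support_def support_def by blast
      show False by (rule exist[OF assms(6) hS sup ls no]) auto
    qed
  next
    fix s1 s2
    assume a1: "s1 \<in> V \<and> single_star_support V E s1 \<and> dist V E v s1 = 2"
      and a2: "s2 \<in> V \<and> single_star_support V E s2 \<and> dist V E v s2 = 2"
    show "s1 = s2"
    proof (rule ccontr)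
      assume "s1 \<noteq> s2"
      then show False using uniq[OF assms(6) hS] a1 a2 by blast
    qed
  qed
qed


end
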